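(* Assume $U_1>2U_2$, $0<\varepsilon\ll U_2$ and $U_2/\varepsilon\notin\mathbb N$, and $L$ large enough. Then $\Phi(\underline 0,\underline 1)\le\Gamma$.
   Context: Let $L\in\mathbb N$, $\Lambda=\{0,\dots,L\}^2$, $\partial^-\Lambda=\{x\in\Lambda:\exists y\notin\Lambda,\ |y-x|=1\}$, $\Lambda_0=\Lambda\setminus\partial^-\Lambda$, configurations $\eta\in\{0,1\}^\Lambda$ with energy $H(\eta)=-U_1\sum_{(x,y)\in\Lambda^*_{0,h}}\eta(x)\eta(y)-U_2\sum_{(x,y)\in\Lambda^*_{0,v}}\eta(x)\eta(y)+\Delta\sum_{x\in\Lambda}\eta(x)$, where $\Lambda^*_{0,h}$ ($\Lambda^*_{0,v}$) are the horizontal (vertical) unoriented nearest-neighbour bonds inside $\Lambda_0$, and $U_1,U_2,\Delta>0$. $\varepsilon=U_1+U_2-\Delta$, $\ell_2^*=\lceil U_2/\varepsilon\rceil$, $\Gamma=U_1\ell_2^*+2U_2\ell_2^*+U_1-U_2-2\varepsilon(\ell_2^* )^2+3\varepsilon\ell_2^*-2\varepsilon$. $\underline 0$ is the empty configuration, $\underline 1$ the configuration equal to $1$ on $\Lambda_0$ and $0$ on $\Lambda\setminus\Lambda_0$. Allowed transitions (Kawasaki dynamics with open boundary): $\eta\to\eta'$ is possible iff $\eta'\neq\eta$ and $\eta'$ is obtained from $\eta$ either by exchanging the values at two nearest-neighbour sites of $\Lambda$, or by setting $\eta(x)=0$ for some $x\in\partial^-\Lambda$, or by setting $\eta(y)=1$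 for some $y\in\partial^-\Lambda$. A path is a sequence of configurations with consecutive ones related by allowed transitions, and $\Phi(\eta,\eta')=\min_{\omega:\eta\to\eta'}\max_{\zeta\in\omega}H(\zeta)$. *)

theory Defs
  imports Complex_Main
begin

type_synonym site = "int \<times> int"
type_synonym config = "site \<Rightarrow> nat"

definition lam :: "nat \<Rightarrow> site set" where
  "lam L = {0..int L} \<times> {0..int L}"

definition adj :: "site \<Rightarrow> site \<Rightarrow> bool" where
  "adj x y \<longleftrightarrow> \<bar>fst x - fst y\<bar> + \<bar>snd x - snd y\<bar> = 1"

definition bdry :: "nat \<Rightarrow> site set" where
  "bdry L = {x \<in> lam L. \<exists>y. adj x y \<and> y \<notin> lam L}"

definition lam0 :: "nat \<Rightarrow> site set" where
  "lam0 L = lam L - bdry L"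

definition hbonds :: "nat \<Rightarrow> (site \<times> site) set" where
  "hbonds L = {(x, y). x \<in> lam0 L \<and> y \<in> lam0 L \<and> snd y = snd x \<and> fst y = fst x + 1}"

definition vbonds :: "nat \<Rightarrow> (site \<times> site) set" where
  "vbonds L = {(x, y). x \<in> lam0 L \<and> y \<in> lam0 L \<and> fst y = fst x \<and> snd y = snd x + 1}"

definition configs :: "nat \<Rightarrow> config set" where
  "configs L = {\<eta>. (\<forall>x\<in>lam L. \<eta> x \<in> {0, 1}) \<and> (\<forall>x. x \<notin> lam L \<longrightarrow> \<eta> x = 0)}"

definition H :: "real \<Rightarrow> real \<Rightarrow> real \<Rightarrow> nat \<Rightarrow> config \<Rightarrow> real" where
  "H U1 U2 \<Delta> L \<eta> =
     - U1 * (\<Sum>(x, y)\<in>hbonds L. real (\<eta> x * \<eta> y))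
     - U2 * (\<Sum>(x, y)\<in>vbonds L. real (\<eta> x * \<eta> y))
     + \<Delta> * (\<Sum>x\<in>lam L. real (\<eta> x))"

definition step :: "nat \<Rightarrow> config \<Rightarrow> config \<Rightarrow> bool" where
  "step L \<eta> \<eta>' \<longleftrightarrow> \<eta>' \<noteq> \<eta> \<and>
     ((\<exists>x y. x \<in> lam L \<and> y \<in> lam L \<and> adj x y \<and> \<eta>' = \<eta>(x := \<eta> y, y := \<eta> x))
      \<or> (\<exists>x\<in>bdry L. \<eta>' = \<eta>(x := 0))
      \<or> (\<exists>y\<in>bdry L. \<eta>' = \<eta>(y := 1)))"

definition is_path :: "nat \<Rightarrow> config \<Rightarrow> config \<Rightarrow> config list \<Rightarrow> bool" where
  "is_path L \<eta> \<eta>' p \<longleftrightarrow> p \<noteq> [] \<and> hd p = \<eta> \<and> last p = \<eta>' \<and> set p \<subseteq> configs L \<and>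
     (\<forall>i. Suc i < length p \<longrightarrow> step L (p ! i) (p ! Suc i))"

definition Phi :: "real \<Rightarrow> real \<Rightarrow> real \<Rightarrow> nat \<Rightarrow> config \<Rightarrow> config \<Rightarrow> real" where
  "Phi U1 U2 \<Delta> L \<eta> \<eta>' = (INF p \<in> {p. is_path L \<eta> \<eta>' p}. Max (H U1 U2 \<Delta> L ` set p))"

definition zero_conf :: config where
  "zero_conf = (\<lambda>_. 0)"

definition one_conf :: "nat \<Rightarrow> config" where
  "one_conf L = (\<lambda>x. if x \<in> lam0 L then 1 else 0)"

definition eps :: "real \<Rightarrow> real \<Rightarrow> real \<Rightarrow> real" where
  "eps U1 U2 \<Delta> = U1 + U2 - \<Delta>"

definition ell2 :: "real \<Rightarrow> real \<Rightarrow> real \<Rightarrow> real" where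
  "ell2 U1 U2 \<Delta> = of_int \<lceil>U2 / eps U1 U2 \<Delta>\<rceil>"

definition Gamma :: "real \<Rightarrow> real \<Rightarrow> real \<Rightarrow> real" where
  "Gamma U1 U2 \<Delta> = (let e = eps U1 U2 \<Delta>; l = ell2 U1 U2 \<Delta> in
     U1 * l + 2 * U2 * l + U1 - U2 - 2 * e * l\<^sup>2 + 3 * e * l - 2 * e)"

end

theory Submission
  imports Defs
begin

definition ind :: "site set \<Rightarrow> config" where
  "ind S = (\<lambda>p. if p \<in> S then 1 else 0)"

lemma lam0_char: "lam0 L = {p. 1 \<le> fst p \<and> fst p \<le> int L - 1 \<and> 1 \<le> snd p \<and> snd p \<le> int L - 1}"
proof (rule set_eqI)
  fix p :: site
  obtain x y where p: "p = (x,y)" by (cases p)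
  show "p \<in> lam0 L \<longleftrightarrow> p \<in> {p. 1 \<le> fst p \<and> fst p \<le> int L - 1 \<and> 1 \<le> snd p \<and> snd p \<le> int L - 1}"
  proof
    assume "p \<in> lam0 L"
    hence inl: "p \<in> lam L" and nb: "\<forall>q. adj p q \<longrightarrow> q \<in> lam L"
      unfolding lam0_def bdry_def by auto
    have "(x-1,y) \<in> lam L" using nb p by (auto simp: adj_def)
    moreover have "(x+1,y) \<in> lam L" using nb p by (auto simp: adj_def)
    moreover have "(x,y-1) \<in> lam L" using nb p by (auto simp: adj_def)
    moreover have "(x,y+1) \<in> lam L" using nb p by (auto simp: adj_def)
    ultimately show "p \<in> {p. 1 \<le> fst p \<and> fst p \<le> int L - 1 \<and> 1 \<le> snd p \<and> snd p \<le> int L - 1}"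
      using p by (auto simp: lam_def)
  next
    assume "p \<in> {p. 1 \<le> fst p \<and> fst p \<le> int L - 1 \<and> 1 \<le> snd p \<and> snd p \<le> int L - 1}"
    hence h: "1 \<le> x" "x \<le> int L - 1" "1 \<le> y" "y \<le> int L - 1" using p by auto
    have "\<forall>q. adj p q \<longrightarrow> q \<in> lam L"
    proof (intro allI impI)
      fix q assume "adj p q"
      then show "q \<in> lam L" using h p by (cases q) (auto simp: adj_def lam_def abs_if split: if_splits)
    qed
    moreover have "p \<in> lam L" using h p by (auto simp: lam_def)
    ultimately show "p \<in> lam0 L" unfolding lam0_def bdry_def by auto
  qed
qed

lemma top_bdry: "0 \<le> x \<Longrightarrow> x \<le> int L \<Longrightarrow> (x, int L) \<in> bdry L"
  unfolding bdry_def lam_def by (rule CollectI, intro conjI exI[of _ "(x, int L + 1)"]) (auto simp: adj_def)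

lemma right_bdry: "0 \<le> y \<Longrightarrow> y \<le> int L \<Longrightarrow> (int L, y) \<in> bdry L"
  unfolding bdry_def lam_def by (rule CollectI, intro conjI exI[of _ "(int L + 1, y)"]) (auto simp: adj_def)


definition hb :: "nat \<Rightarrow> site set \<Rightarrow> (site \<times> site) set" where
  "hb L S = {q \<in> hbonds L. fst q \<in> S \<and> snd q \<in> S}"
definition vb :: "nat \<Rightarrow> site set \<Rightarrow> (site \<times> site) set" where
  "vb L S = {q \<in> vbonds L. fst q \<in> S \<and> snd q \<in> S}"

lemma finite_lam: "finite (lam L)" unfolding lam_def by auto
lemma lam0_sub: "lam0 L \<subseteq> lam L" unfolding lam0_def by auto
lemma finite_hbonds: "finite (hbonds L)"
proof -
  have "hbonds L \<subseteq> lam L \<times> lam L" unfolding hbonds_def using lam0_sub by auto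
  thus ?thesis using finite_lam by (meson finite_SigmaI finite_subset)
qed
lemma finite_vbonds: "finite (vbonds L)"
proof -
  have "vbonds L \<subseteq> lam L \<times> lam L" unfolding vbonds_def using lam0_sub by auto
  thus ?thesis using finite_lam by (meson finite_SigmaI finite_subset)
qed

lemma sum_ind_prod:
  assumes "finite A"
  shows "(\<Sum>(x, y)\<in>A. real (ind S x * ind S y)) = real (card {q \<in> A. fst q \<in> S \<and> snd q \<in> S})"
proof -
  have "(\<Sum>(x, y)\<in>A. real (ind S x * ind S y)) = (\<Sum>q\<in>A. if fst q \<in> S \<and> snd q \<in> S then 1 else 0)"
    by (rule sum.cong) (auto simp: ind_def)
  also have "\<dots> = real (card {q \<in> A. fst q \<in> S \<and> snd q \<in> S})"
    using assms by (subst sum.inter_filter[symmetric]) auto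
  finally show ?thesis .
qed

lemma H_ind:
  assumes "S \<subseteq> lam L"
  shows "H U1 U2 D L (ind S) = D * card S - U1 * card (hb L S) - U2 * card (vb L S)"
proof -
  have "(\<Sum>x\<in>lam L. real (ind S x)) = (\<Sum>x\<in>lam L. if x \<in> S then 1 else 0)"
    by (rule sum.cong) (auto simp: ind_def)
  also have "\<dots> = real (card {x \<in> lam L. x \<in> S})"
    using finite_lam by (subst sum.inter_filter[symmetric]) auto
  also have "{x \<in> lam L. x \<in> S} = S" using assms by auto
  finally have "(\<Sum>x\<in>lam L. real (ind S x)) = real (card S)" by simp
  thus ?thesis unfolding H_def hb_def vb_def
    using sum_ind_prod[OF finite_hbonds] sum_ind_prod[OF finite_vbonds] by simp
qed

lemma finite_sub_lam: "S \<subseteq> lam L \<Longrightarrow> finite S"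
  using finite_lam finite_subset by blast

lemma hb_mono: "S \<subseteq> T \<Longrightarrow> card (hb L S) \<le> card (hb L T)"
  unfolding hb_def by (rule card_mono) (auto intro: finite_subset[OF _ finite_hbonds])
lemma vb_mono: "S \<subseteq> T \<Longrightarrow> card (vb L S) \<le> card (vb L T)"
  unfolding vb_def by (rule card_mono) (auto intro: finite_subset[OF _ finite_vbonds])

lemma En_insert_le:
  assumes "S \<subseteq> lam L" "z \<in> lam L" "z \<notin> S" "U1 \<ge> 0" "U2 \<ge> 0"
  shows "H U1 U2 D L (ind (insert z S)) \<le> H U1 U2 D L (ind S) + D"
proof -
  have f: "finite S" using finite_sub_lam assms(1) .
  have c: "card (insert z S) = card S + 1" using f assms(3) by simp
  have "real (card (hb L S)) \<le> card (hb L (insert z S))" using hb_mono[of S "insert z S"] by auto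
  hence 1: "U1 * card (hb L S) \<le> U1 * card (hb L (insert z S))" using assms(4) by (simp add: mult_left_mono)
  have "real (card (vb L S)) \<le> card (vb L (insert z S))" using vb_mono[of S "insert z S"] by auto
  hence 2: "U2 * card (vb L S) \<le> U2 * card (vb L (insert z S))" using assms(5) by (simp add: mult_left_mono)
  show ?thesis using H_ind[of S L U1 U2 D] H_ind[of "insert z S" L U1 U2 D] assms(1,2) c 1 2 by (simp add: algebra_simps)
qed

definition iv :: "bool \<Rightarrow> real" where "iv b = (if b then 1 else 0)"

lemma hb_insert:
  assumes "S \<subseteq> lam0 L" "(x,y) \<in> lam0 L" "(x,y) \<notin> S"
  shows "card (hb L (insert (x,y) S)) = card (hb L S) + (if (x-1,y) \<in> S then 1 else 0) + (if (x+1,y) \<in> S then 1 else 0)"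
proof -
  let ?z = "(x,y)"
  define N1 where "N1 = (if (x+1,y) \<in> S then {(?z,(x+1,y))} else {})"
  define N2 where "N2 = (if (x-1,y) \<in> S then {((x-1,y),?z)} else {})"
  have eq: "hb L (insert ?z S) = hb L S \<union> (N1 \<union> N2)"
    using assms unfolding hb_def hbonds_def N1_def N2_def by (auto split: if_splits)
  have fin: "finite (hb L S)" unfolding hb_def using finite_hbonds by auto
  have d: "hb L S \<inter> (N1 \<union> N2) = {}" using assms(3) unfolding hb_def N1_def N2_def by auto
  have d2: "N1 \<inter> N2 = {}" unfolding N1_def N2_def by auto
  have "card (N1 \<union> N2) = card N1 + card N2" using d2 by (simp add: card_Un_disjoint N1_def N2_def)
  moreover have "card N1 = (if (x+1,y) \<in> S then 1 else 0)" unfolding N1_def by simp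
  moreover have "card N2 = (if (x-1,y) \<in> S then 1 else 0)" unfolding N2_def by simp
  ultimately show ?thesis unfolding eq using card_Un_disjoint[OF fin _ d] N1_def N2_def by simp
qed

lemma vb_insert:
  assumes "S \<subseteq> lam0 L" "(x,y) \<in> lam0 L" "(x,y) \<notin> S"
  shows "card (vb L (insert (x,y) S)) = card (vb L S) + (if (x,y-1) \<in> S then 1 else 0) + (if (x,y+1) \<in> S then 1 else 0)"
proof -
  let ?z = "(x,y)"
  define N1 where "N1 = (if (x,y+1) \<in> S then {(?z,(x,y+1))} else {})"
  define N2 where "N2 = (if (x,y-1) \<in> S then {((x,y-1),?z)} else {})"
  have eq: "vb L (insert ?z S) = vb L S \<union> (N1 \<union> N2)"
    using assms unfolding vb_def vbonds_def N1_def N2_def by (auto split: if_splits)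
  have fin: "finite (vb L S)" unfolding vb_def using finite_vbonds by auto
  have d: "vb L S \<inter> (N1 \<union> N2) = {}" using assms(3) unfolding vb_def N1_def N2_def by auto
  have d2: "N1 \<inter> N2 = {}" unfolding N1_def N2_def by auto
  have "card (N1 \<union> N2) = card N1 + card N2" using d2 by (simp add: card_Un_disjoint N1_def N2_def)
  moreover have "card N1 = (if (x,y+1) \<in> S then 1 else 0)" unfolding N1_def by simp
  moreover have "card N2 = (if (x,y-1) \<in> S then 1 else 0)" unfolding N2_def by simp
  ultimately show ?thesis unfolding eq using card_Un_disjoint[OF fin _ d] N1_def N2_def by simp
qed

lemma En_insert:
  assumes "S \<subseteq> lam0 L" "(x,y) \<in> lam0 L" "(x,y) \<notin> S"
  shows "H U1 U2 D L (ind (insert (x,y) S)) = H U1 U2 D L (ind S) + D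
     - U1 * (iv ((x-1,y) \<in> S) + iv ((x+1,y) \<in> S)) - U2 * (iv ((x,y-1) \<in> S) + iv ((x,y+1) \<in> S))"
proof -
  have s: "S \<subseteq> lam L" "insert (x,y) S \<subseteq> lam L" using assms lam0_sub by auto
  have f: "finite S" using finite_sub_lam s(1) .
  have c: "card (insert (x,y) S) = card S + 1" using f assms(3) by simp
  show ?thesis using H_ind[OF s(1), of U1 U2 D] H_ind[OF s(2), of U1 U2 D] c hb_insert[OF assms] vb_insert[OF assms]
    by (auto simp: iv_def algebra_simps)
qed


lemma ind_configs: "S \<subseteq> lam L \<Longrightarrow> ind S \<in> configs L"
  unfolding configs_def ind_def by auto

lemma is_path_cons:
  assumes "is_path L b c q" "step L a b" "a \<in> configs L"
  shows "is_path L a c (a # q)"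
proof -
  have q: "q \<noteq> []" "hd q = b" "last q = c" "set q \<subseteq> configs L"
     "\<forall>i. Suc i < length q \<longrightarrow> step L (q ! i) (q ! Suc i)"
    using assms(1) unfolding is_path_def by auto
  have "\<forall>i. Suc i < length (a # q) \<longrightarrow> step L ((a # q) ! i) ((a # q) ! Suc i)"
  proof (intro allI impI)
    fix i assume i: "Suc i < length (a # q)"
    show "step L ((a # q) ! i) ((a # q) ! Suc i)"
    proof (cases i)
      case 0 thus ?thesis using q assms(2) by (cases q) auto
    next
      case (Suc j) thus ?thesis using q i by auto
    qed
  qed
  thus ?thesis using q assms(3) unfolding is_path_def by auto
qed

lemma is_path_append:
  assumes "is_path L a b p" "is_path L b c q"
  shows "is_path L a c (p @ tl q)"
  using assms
proof (induction p arbitrary: a)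
  case Nil thus ?case by (simp add: is_path_def)
next
  case (Cons x p)
  show ?case
  proof (cases p)
    case Nil
    hence "x = a" "a = b" using Cons.prems(1) by (auto simp: is_path_def)
    moreover have "q \<noteq> []" "hd q = b" using Cons.prems(2) by (auto simp: is_path_def)
    ultimately have "(x # p) @ tl q = q" using Nil by (cases q) auto
    thus ?thesis using Cons.prems \<open>a = b\<close> by simp
  next
    case (Cons y ys)
    have P: "x = a" "last (x#p) = b" "set (x#p) \<subseteq> configs L"
       "\<forall>i. Suc i < length (x#p) \<longrightarrow> step L ((x#p) ! i) ((x#p) ! Suc i)"
      using Cons.prems(1) unfolding is_path_def by auto
    have st: "step L x y" using P(4)[rule_format, of 0] Cons by simp
    have "is_path L y b p"
      unfolding is_path_def
    proof (intro conjI allI impI)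
      show "p \<noteq> []" using Cons by simp
      show "hd p = y" using Cons by simp
      show "last p = b" using P(2) Cons by simp
      show "set p \<subseteq> configs L" using P(3) by auto
      fix i assume "Suc i < length p"
      thus "step L (p ! i) (p ! Suc i)" using P(4)[rule_format, of "Suc i"] by simp
    qed
    hence "is_path L y c (p @ tl q)" using Cons.IH Cons.prems(2) by blast
    moreover have "hd (p @ tl q) = y" using Cons by simp
    ultimately have "is_path L x c (x # (p @ tl q))"
      using is_path_cons st P(3) by (metis Cons.prems(1) is_path_def list.set_intros(1) subsetD)
    thus ?thesis using P(1) by simp
  qed
qed

lemma step_create:
  assumes "y \<in> bdry L" "y \<notin> S"
  shows "step L (ind S) (ind (insert y S))"
proof -
  have "ind (insert y S) = (ind S)(y := 1)" unfolding ind_def by auto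
  moreover have "ind (insert y S) \<noteq> ind S" using assms(2) unfolding ind_def by (metis insertI1 zero_neq_one)
  ultimately show ?thesis unfolding step_def using assms(1) by metis
qed

lemma step_move:
  assumes "z \<in> S" "w \<notin> S" "z \<in> lam L" "w \<in> lam L" "adj z w"
  shows "step L (ind S) (ind (insert w (S - {z})))"
proof -
  have zw: "z \<noteq> w" using assms by auto
  have "ind (insert w (S - {z})) = (ind S)(z := ind S w, w := ind S z)"
    using assms zw unfolding ind_def by auto
  moreover have "ind (insert w (S - {z})) \<noteq> ind S" using assms(2) unfolding ind_def
    by (metis insertI1 zero_neq_one)
  ultimately show ?thesis unfolding step_def using assms(3,4,5) by blast
qed

context
  fixes U1 U2 D :: real and L :: nat
begin

definition reach :: "real \<Rightarrow> site set \<Rightarrow> site set \<Rightarrow> bool" where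
  "reach M S T \<longleftrightarrow> S \<subseteq> lam L \<and> T \<subseteq> lam L \<and>
     (\<exists>p. is_path L (ind S) (ind T) p \<and> (\<forall>c\<in>set p. H U1 U2 D L c \<le> M))"

abbreviation En :: "site set \<Rightarrow> real" where "En S \<equiv> H U1 U2 D L (ind S)"

lemma reach_refl: "S \<subseteq> lam L \<Longrightarrow> En S \<le> M \<Longrightarrow> reach M S S"
  unfolding reach_def is_path_def using ind_configs by (intro conjI exI[of _ "[ind S]"]) auto

lemma reach_trans: "reach M S T \<Longrightarrow> reach M T V \<Longrightarrow> reach M S V"
  unfolding reach_def
proof (elim conjE exE, intro conjI)
  fix p q
  assume a: "is_path L (ind S) (ind T) p" "\<forall>c\<in>set p. H U1 U2 D L c \<le> M"
    "is_path L (ind T) (ind V) q" "\<forall>c\<in>set q. H U1 U2 D L c \<le> M"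
  show "\<exists>p. is_path L (ind S) (ind V) p \<and> (\<forall>c\<in>set p. H U1 U2 D L c \<le> M)"
    using is_path_append[OF a(1) a(3)] a(2,4) by (intro exI[of _ "p @ tl q"]) (cases q; auto)
qed auto

lemma reach_mono: "reach M S T \<Longrightarrow> M \<le> M' \<Longrightarrow> reach M' S T"
  unfolding reach_def by force

lemma reach_one:
  assumes "step L (ind S) (ind T)" "S \<subseteq> lam L" "T \<subseteq> lam L" "En S \<le> M" "En T \<le> M"
  shows "reach M S T"
proof -
  have "is_path L (ind T) (ind T) [ind T]" using ind_configs assms(3) unfolding is_path_def by auto
  hence "is_path L (ind S) (ind T) [ind S, ind T]"
    using is_path_cons[OF _ assms(1)] ind_configs assms(2) by fastforce
  thus ?thesis unfolding reach_def using assms by (intro conjI exI[of _ "[ind S, ind T]"]) auto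
qed

lemma reach_end_le: "reach M S T \<Longrightarrow> En T \<le> M"
  unfolding reach_def is_path_def by (metis last_in_set)

lemma reach_start_le: "reach M S T \<Longrightarrow> En S \<le> M"
  unfolding reach_def is_path_def by (metis hd_in_set)

lemma reach_sub: "reach M S T \<Longrightarrow> T \<subseteq> lam L"
  unfolding reach_def by auto

lemma reach_move_end:
  assumes "reach M S T" "z \<in> T" "w \<notin> T" "w \<in> lam L" "adj z w" "En (insert w (T - {z})) \<le> M"
  shows "reach M S (insert w (T - {z}))"
proof -
  have T: "T \<subseteq> lam L" using reach_sub assms(1) .
  have "reach M T (insert w (T - {z}))"
    using reach_one[OF step_move[OF assms(2,3) _ assms(4,5)] T] T assms(2,4,6) reach_end_le[OF assms(1)] by auto
  thus ?thesis using reach_trans assms(1) by blast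
qed

lemma reach_create_end:
  assumes "reach M S T" "y \<in> bdry L" "y \<notin> T" "En (insert y T) \<le> M"
  shows "reach M S (insert y T)"
proof -
  have T: "T \<subseteq> lam L" using reach_sub assms(1) .
  have y: "y \<in> lam L" using assms(2) unfolding bdry_def by auto
  have "reach M T (insert y T)"
    using reach_one[OF step_create[OF assms(2,3)] T] T y assms(4) reach_end_le[OF assms(1)] by auto
  thus ?thesis using reach_trans assms(1) by blast
qed

lemma walk_down:
  assumes U: "0 \<le> U1" "0 \<le> U2" "0 \<le> D"
    and S: "S \<subseteq> lam L" and x: "0 \<le> x" "x \<le> int L" and y0: "0 \<le> y0" "y0 \<le> int L"
    and free: "\<forall>y. y0 \<le> y \<and> y \<le> int L \<longrightarrow> (x,y) \<notin> S"
    and M: "En S + D \<le> M"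
  shows "reach M S (insert (x,y0) S)"
  using y0 free
proof (induction "nat (int L - y0)" arbitrary: y0)
  case 0
  hence yL: "y0 = int L" by auto
  have r0: "reach M S S" using reach_refl S M U by auto
  have "(x, y0) \<in> lam L" using x 0 unfolding lam_def by auto
  hence "En (insert (x,y0) S) \<le> M" using En_insert_le[OF S _ _ U(1,2), of "(x,y0)" D] 0 M by auto
  thus ?case using reach_create_end[OF r0 top_bdry[OF x]] yL 0 by auto
next
  case (Suc n)
  hence r: "reach M S (insert (x,y0+1) S)" using Suc by (intro Suc.hyps) auto
  have l1: "(x, y0) \<in> lam L" "(x, y0+1) \<in> lam L" using x Suc.prems Suc.hyps(2) unfolding lam_def by auto
  have nS: "(x,y0) \<notin> S" "(x,y0+1) \<notin> S" using Suc.prems Suc.hyps(2) by auto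
  have eq: "insert (x,y0) (insert (x,y0+1) S - {(x,y0+1)}) = insert (x,y0) S" using nS by auto
  have "En (insert (x,y0) S) \<le> M" using En_insert_le[OF S l1(1) nS(1) U(1,2), of D] M by auto
  hence "reach M S (insert (x,y0) (insert (x,y0+1) S - {(x,y0+1)}))"
    using reach_move_end[OF r, of "(x,y0+1)" "(x,y0)"] l1 nS eq by (auto simp: adj_def)
  thus ?case using eq by simp
qed

lemma walk_left:
  assumes U: "0 \<le> U1" "0 \<le> U2" "0 \<le> D"
    and S: "S \<subseteq> lam L" and y: "0 \<le> y" "y \<le> int L" and x0: "0 \<le> x0" "x0 \<le> int L"
    and free: "\<forall>x. x0 \<le> x \<and> x \<le> int L \<longrightarrow> (x,y) \<notin> S"
    and M: "En S + D \<le> M"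
  shows "reach M S (insert (x0,y) S)"
  using x0 free
proof (induction "nat (int L - x0)" arbitrary: x0)
  case 0
  hence xL: "x0 = int L" by auto
  have r0: "reach M S S" using reach_refl S M U by auto
  have "(x0, y) \<in> lam L" using y 0 unfolding lam_def by auto
  hence "En (insert (x0,y) S) \<le> M" using En_insert_le[OF S _ _ U(1,2), of "(x0,y)" D] 0 M by auto
  thus ?case using reach_create_end[OF r0 right_bdry[OF y]] xL 0 by auto
next
  case (Suc n)
  hence r: "reach M S (insert (x0+1,y) S)" using Suc by (intro Suc.hyps) auto
  have l1: "(x0, y) \<in> lam L" "(x0+1, y) \<in> lam L" using y Suc.prems Suc.hyps(2) unfolding lam_def by auto
  have nS: "(x0,y) \<notin> S" "(x0+1,y) \<notin> S" using Suc.prems Suc.hyps(2) by auto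
  have eq: "insert (x0,y) (insert (x0+1,y) S - {(x0+1,y)}) = insert (x0,y) S" using nS by auto
  have "En (insert (x0,y) S) \<le> M" using En_insert_le[OF S l1(1) nS(1) U(1,2), of D] M by auto
  hence "reach M S (insert (x0,y) (insert (x0+1,y) S - {(x0+1,y)}))"
    using reach_move_end[OF r, of "(x0+1,y)" "(x0,y)"] l1 nS eq by (auto simp: adj_def)
  thus ?case using eq by simp
qed

end

definition Rc :: "int \<Rightarrow> int \<Rightarrow> site set" where
  "Rc a b = {p. 1 \<le> fst p \<and> fst p \<le> a \<and> 1 \<le> snd p \<and> snd p \<le> b}"
definition Hs :: "int \<Rightarrow> int \<Rightarrow> int \<Rightarrow> site set" where
  "Hs c d y = {p. c \<le> fst p \<and> fst p \<le> d \<and> snd p = y}"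
definition Vs :: "int \<Rightarrow> int \<Rightarrow> int \<Rightarrow> site set" where
  "Vs x c d = {p. fst p = x \<and> c \<le> snd p \<and> snd p \<le> d}"

lemma mem_Rc[simp]: "(x,y) \<in> Rc a b \<longleftrightarrow> 1 \<le> x \<and> x \<le> a \<and> 1 \<le> y \<and> y \<le> b" by (simp add: Rc_def)
lemma mem_Hs[simp]: "(x,y) \<in> Hs c d y' \<longleftrightarrow> c \<le> x \<and> x \<le> d \<and> y = y'" by (simp add: Hs_def)
lemma mem_Vs[simp]: "(x,y) \<in> Vs x' c d \<longleftrightarrow> x = x' \<and> c \<le> y \<and> y \<le> d" by (simp add: Vs_def)
lemma mem_lam0: "(x,y) \<in> lam0 L \<longleftrightarrow> 1 \<le> x \<and> x \<le> int L - 1 \<and> 1 \<le> y \<and> y \<le> int L - 1"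
  by (simp add: lam0_char)

lemma sub_lam0I: "(\<And>x y. (x,y) \<in> S \<Longrightarrow> 1 \<le> x \<and> x \<le> int L - 1 \<and> 1 \<le> y \<and> y \<le> int L - 1) \<Longrightarrow> S \<subseteq> lam0 L"
  by (auto simp: mem_lam0)

context
  fixes U1 U2 D :: real and L :: nat
begin


definition Ef :: "int \<Rightarrow> int \<Rightarrow> real" where
  "Ef a b = - (U1 + U2 - D) * a * b + U1 * b + U2 * a"

lemma col_fill:
  assumes U: "0 \<le> U1" "0 \<le> U2" "0 \<le> D" "0 \<le> (U1 + U2 - D)"
    and ab: "1 \<le> a" "a + 1 \<le> int L - 1" "1 \<le> b" "b \<le> int L - 1"
    and e: "En U1 U2 D L (Rc a b) = e" and M: "e + D \<le> M" "e + 2*D - U1 \<le> M"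
  shows "int j \<le> b \<Longrightarrow> reach U1 U2 D L M (Rc a b) (Rc a b \<union> Vs (a+1) 1 (int j)) \<and>
    En U1 U2 D L (Rc a b \<union> Vs (a+1) 1 (int j)) = e + (if j = 0 then 0 else U2 - (U1 + U2 - D) * j)"
proof (induction j)
  case 0
  have "Vs (a+1) 1 0 = {}" by (auto simp: Vs_def)
  moreover have "Rc a b \<subseteq> lam0 L" using ab by (intro sub_lam0I) auto
  hence "Rc a b \<subseteq> lam L" using lam0_sub by blast
  ultimately show ?case using reach_refl[of "Rc a b" L U1 U2 D M] e M U by auto
next
  case (Suc j)
  let ?S = "Rc a b \<union> Vs (a+1) 1 (int j)"
  have IH: "reach U1 U2 D L M (Rc a b) ?S" "En U1 U2 D L ?S = e + (if j = 0 then 0 else U2 - (U1 + U2 - D) * j)"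
    using Suc by auto
  have S0: "?S \<subseteq> lam0 L" using ab Suc.prems by (intro sub_lam0I) auto
  hence S: "?S \<subseteq> lam L" using lam0_sub by auto
  have Ele: "En U1 U2 D L ?S + D \<le> M"
  proof (cases "j = 0")
    case True thus ?thesis using IH M by simp
  next
    case False
    have "(U1 + U2 - D) * 1 \<le> (U1 + U2 - D) * j" using False U(4) by (intro mult_left_mono) auto
    thus ?thesis using IH M False by auto
  qed
  have w: "reach U1 U2 D L M ?S (insert (a+1, int j + 1) ?S)"
    using walk_left[OF U(1,2,3) S, of "int j + 1" "a+1" M] ab Suc.prems Ele by auto
  have z0: "(a+1, int j+1) \<in> lam0 L" "(a+1, int j+1) \<notin> ?S" using ab Suc.prems by (auto simp: mem_lam0)
  have En1: "En U1 U2 D L (insert (a+1, int j + 1) ?S) = En U1 U2 D L ?S + D - U1 * (iv True + iv False)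
        - U2 * (iv (j \<noteq> 0) + iv False)"
    using En_insert[OF S0 z0, of U1 U2 D] ab Suc.prems by (simp add: iv_def)
  have eq: "insert (a+1, int j + 1) ?S = Rc a b \<union> Vs (a+1) 1 (int (Suc j))" by auto
  show ?case
  proof
    show "reach U1 U2 D L M (Rc a b) (Rc a b \<union> Vs (a + 1) 1 (int (Suc j)))"
      using reach_trans[OF IH(1) w] eq by simp
    show "En U1 U2 D L (Rc a b \<union> Vs (a + 1) 1 (int (Suc j))) = e + (if Suc j = 0 then 0 else U2 - (U1 + U2 - D) * real (Suc j))"
      using En1 eq IH(2) by (cases "j = 0") (auto simp: iv_def algebra_simps)
  qed
qed

lemma Rc_sub: "1 \<le> a \<Longrightarrow> a \<le> int L - 1 \<Longrightarrow> b \<le> int L - 1 \<Longrightarrow> Rc a b \<subseteq> lam L"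
proof -
  assume "1 \<le> a" "a \<le> int L - 1" "b \<le> int L - 1"
  hence "Rc a b \<subseteq> lam0 L" by (intro sub_lam0I) auto
  thus ?thesis using lam0_sub by blast
qed

lemma cols:
  assumes U: "0 \<le> U1" "0 \<le> U2" "0 \<le> D" "0 \<le> (U1 + U2 - D)"
    and ab: "1 \<le> a" "1 \<le> b" "b \<le> int L - 1" "a + int n \<le> int L - 1"
    and e: "En U1 U2 D L (Rc a b) = Ef a b"
    and M0: "Ef a b \<le> M"
    and M: "\<forall>k<n. Ef (a + int k) b + D \<le> M \<and> Ef (a + int k) b + 2*D - U1 \<le> M"
  shows "reach U1 U2 D L M (Rc a b) (Rc (a + int n) b) \<and> En U1 U2 D L (Rc (a + int n) b) = Ef (a + int n) b"
  using ab(4) M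
proof (induction n)
  case 0
  have "Rc a b \<subseteq> lam L" using Rc_sub ab by auto
  thus ?case using reach_refl e M0 by auto
next
  case (Suc n)
  have IH: "reach U1 U2 D L M (Rc a b) (Rc (a + int n) b)" "En U1 U2 D L (Rc (a + int n) b) = Ef (a + int n) b"
    using Suc by auto
  have Mn: "Ef (a + int n) b + D \<le> M" "Ef (a + int n) b + 2*D - U1 \<le> M" using Suc.prems(2) by auto
  have cf: "reach U1 U2 D L M (Rc (a + int n) b) (Rc (a + int n) b \<union> Vs (a + int n + 1) 1 (int (nat b))) \<and>
    En U1 U2 D L (Rc (a + int n) b \<union> Vs (a + int n + 1) 1 (int (nat b))) = Ef (a + int n) b + (if nat b = 0 then 0 else U2 - (U1 + U2 - D) * (nat b))"
    using col_fill[OF U, of "a + int n" b "Ef (a + int n) b" M "nat b"] ab Suc.prems IH(2) Mn by auto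
  have eq: "Rc (a + int n) b \<union> Vs (a + int n + 1) 1 (int (nat b)) = Rc (a + int (Suc n)) b"
    using ab by auto
  have nb: "nat b \<noteq> 0" "real (nat b) = real_of_int b" using ab by auto
  have "Ef (a + int n) b + (U2 - (U1 + U2 - D) * real_of_int b) = Ef (a + int (Suc n)) b"
    unfolding Ef_def by (simp add: algebra_simps)
  thus ?case using cf eq nb reach_trans[OF IH(1)] by auto
qed

lemma prot:
  assumes U: "0 \<le> U1" "0 \<le> U2" "0 \<le> D"
    and ab: "1 \<le> x" "x \<le> a" "a \<le> int L - 1" "1 \<le> b" "b + 1 \<le> int L - 1"
    and e: "En U1 U2 D L (Rc a b) = e" and M: "e + D \<le> M"
  shows "reach U1 U2 D L M (Rc a b) (Rc a b \<union> Hs x x (b+1)) \<and> En U1 U2 D L (Rc a b \<union> Hs x x (b+1)) = e + D - U2"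
proof -
  have S0: "Rc a b \<subseteq> lam0 L" using ab by (intro sub_lam0I) auto
  hence S: "Rc a b \<subseteq> lam L" using lam0_sub by blast
  have w: "reach U1 U2 D L M (Rc a b) (insert (x, b+1) (Rc a b))"
    using walk_down[OF U S, of x "b+1" M] ab e M by auto
  have z0: "(x, b+1) \<in> lam0 L" "(x, b+1) \<notin> Rc a b" using ab by (auto simp: mem_lam0)
  have En1: "En U1 U2 D L (insert (x, b+1) (Rc a b)) = e + D - U1 * (iv False + iv False) - U2 * (iv True + iv False)"
    using En_insert[OF S0 z0, of U1 U2 D] ab e by (simp add: iv_def)
  have eq: "insert (x, b+1) (Rc a b) = Rc a b \<union> Hs x x (b+1)" by auto
  show ?thesis using w En1 eq by (simp add: iv_def)
qed

lemma fill_left: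
  assumes U: "0 \<le> U1" "0 \<le> U2" "0 \<le> D" "0 \<le> (U1 + U2 - D)"
    and ab: "1 \<le> b" "b + 1 \<le> int L - 1" "1 \<le> c" "c \<le> d" "d \<le> a" "a \<le> int L - 1"
    and e: "En U1 U2 D L (Rc a b \<union> Hs c d (b+1)) = e" and M: "e + D \<le> M"
  shows "int k \<le> c - 1 \<Longrightarrow> reach U1 U2 D L M (Rc a b \<union> Hs c d (b+1)) (Rc a b \<union> Hs (c - int k) d (b+1)) \<and>
     En U1 U2 D L (Rc a b \<union> Hs (c - int k) d (b+1)) = e - (U1 + U2 - D) * k"
proof (induction k)
  case 0
  have "Rc a b \<union> Hs c d (b+1) \<subseteq> lam0 L" using ab by (intro sub_lam0I) auto
  hence "Rc a b \<union> Hs c d (b+1) \<subseteq> lam L" using lam0_sub by blast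
  thus ?case using reach_refl e M U by auto
next
  case (Suc k)
  let ?S = "Rc a b \<union> Hs (c - int k) d (b+1)"
  let ?x = "c - int k - 1"
  have IH: "reach U1 U2 D L M (Rc a b \<union> Hs c d (b+1)) ?S" "En U1 U2 D L ?S = e - (U1 + U2 - D) * k"
    using Suc by auto
  have S0: "?S \<subseteq> lam0 L" using ab Suc.prems by (intro sub_lam0I) auto
  hence S: "?S \<subseteq> lam L" using lam0_sub by auto
  have "0 \<le> (U1 + U2 - D) * k" using U by simp
  hence Ele: "En U1 U2 D L ?S + D \<le> M" using IH M by auto
  have w: "reach U1 U2 D L M ?S (insert (?x, b+1) ?S)"
    using walk_down[OF U(1,2,3) S, of ?x "b+1" M] ab Suc.prems Ele by auto
  have z0: "(?x, b+1) \<in> lam0 L" "(?x, b+1) \<notin> ?S" using ab Suc.prems by (auto simp: mem_lam0)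
  have En1: "En U1 U2 D L (insert (?x, b+1) ?S) = En U1 U2 D L ?S + D - U1 * (iv False + iv True)
        - U2 * (iv True + iv False)"
    using En_insert[OF S0 z0, of U1 U2 D] ab Suc.prems by (simp add: iv_def)
  have eq: "insert (?x, b+1) ?S = Rc a b \<union> Hs (c - int (Suc k)) d (b+1)" using ab Suc.prems by auto
  show ?case
  proof
    show "reach U1 U2 D L M (Rc a b \<union> Hs c d (b+1)) (Rc a b \<union> Hs (c - int (Suc k)) d (b+1))"
      using reach_trans[OF IH(1) w] eq by simp
    show "En U1 U2 D L (Rc a b \<union> Hs (c - int (Suc k)) d (b+1)) = e - (U1 + U2 - D) * real (Suc k)"
      using En1 eq IH(2) by (auto simp: iv_def algebra_simps)
  qed
qed

end

lemma En_move:
  assumes S: "S \<subseteq> lam0 L" and z: "(x,y) \<in> S" and w: "(u,v) \<in> lam0 L" "(u,v) \<notin> S"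
  shows "H U1 U2 D L (ind (insert (u,v) (S - {(x,y)}))) = H U1 U2 D L (ind S)
     + U1 * (iv ((x-1,y) \<in> S - {(x,y)}) + iv ((x+1,y) \<in> S - {(x,y)}))
     + U2 * (iv ((x,y-1) \<in> S - {(x,y)}) + iv ((x,y+1) \<in> S - {(x,y)}))
     - U1 * (iv ((u-1,v) \<in> S - {(x,y)}) + iv ((u+1,v) \<in> S - {(x,y)}))
     - U2 * (iv ((u,v-1) \<in> S - {(x,y)}) + iv ((u,v+1) \<in> S - {(x,y)}))"
proof -
  have S': "S - {(x,y)} \<subseteq> lam0 L" using S by auto
  have zl: "(x,y) \<in> lam0 L" using S z by auto
  have e1: "H U1 U2 D L (ind (insert (x,y) (S - {(x,y)}))) = H U1 U2 D L (ind (S - {(x,y)})) + D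
     - U1 * (iv ((x-1,y) \<in> S - {(x,y)}) + iv ((x+1,y) \<in> S - {(x,y)}))
     - U2 * (iv ((x,y-1) \<in> S - {(x,y)}) + iv ((x,y+1) \<in> S - {(x,y)}))"
    by (rule En_insert[OF S' zl]) simp
  have e2: "H U1 U2 D L (ind (insert (u,v) (S - {(x,y)}))) = H U1 U2 D L (ind (S - {(x,y)})) + D
     - U1 * (iv ((u-1,v) \<in> S - {(x,y)}) + iv ((u+1,v) \<in> S - {(x,y)}))
     - U2 * (iv ((u,v-1) \<in> S - {(x,y)}) + iv ((u,v+1) \<in> S - {(x,y)}))"
    by (rule En_insert[OF S' w(1)]) (use w(2) in auto)
  have "insert (x,y) (S - {(x,y)}) = S" using z by auto
  thus ?thesis using e1 e2 by (simp add: algebra_simps)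
qed

context
  fixes U1 U2 D :: real and L :: nat and a b :: int
begin

definition K :: "int \<Rightarrow> int \<Rightarrow> site set" where
  "K i h = Rc (a-1) b \<union> Hs (a-i) (a-1) (b+1) \<union> (Vs a i (b+1) - {(a,h)})"

definition Q :: "int \<Rightarrow> int \<Rightarrow> site set" where
  "Q i g = Rc (a-1) b \<union> Vs a (i+1) b \<union> (Hs (a-i-1) a (b+1) - {(g,b+1)})"

lemma mem_K: "(x,y) \<in> K i h \<longleftrightarrow> (1 \<le> x \<and> x \<le> a-1 \<and> 1 \<le> y \<and> y \<le> b) \<or> (a-i \<le> x \<and> x \<le> a-1 \<and> y = b+1)
   \<or> (x = a \<and> i \<le> y \<and> y \<le> b+1 \<and> y \<noteq> h)"
  unfolding K_def by auto

lemma mem_Q: "(x,y) \<in> Q i g \<longleftrightarrow> (1 \<le> x \<and> x \<le> a-1 \<and> 1 \<le> y \<and> y \<le> b) \<or> (x = a \<and> i+1 \<le> y \<and> y \<le> b)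
   \<or> (a-i-1 \<le> x \<and> x \<le> a \<and> y = b+1 \<and> x \<noteq> g)"
  unfolding Q_def by auto

lemma col_slide:
  assumes U: "0 \<le> U1" "0 \<le> U2" "0 \<le> D"
    and ab: "1 \<le> i" "i \<le> b" "a \<le> int L - 1" "b + 1 \<le> int L - 1" "i + 1 \<le> a"
    and e: "En U1 U2 D L (K i (b+1)) = e" and M: "e + U2 \<le> M"
  shows "int n \<le> b + 1 - i \<Longrightarrow> reach U1 U2 D L M (K i (b+1)) (K i (b + 1 - int n)) \<and>
     En U1 U2 D L (K i (b + 1 - int n)) = e + (if i < b + 1 - int n \<and> b + 1 - int n \<le> b then U2 else 0)"
proof (induction n)
  case 0
  have "K i (b+1) \<subseteq> lam0 L" using ab by (intro sub_lam0I) (auto simp: mem_K)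
  hence "K i (b+1) \<subseteq> lam L" using lam0_sub by blast
  thus ?case using reach_refl e M U by auto
next
  case (Suc n)
  let ?h = "b + 1 - int n"
  have IH: "reach U1 U2 D L M (K i (b+1)) (K i ?h)"
    "En U1 U2 D L (K i ?h) = e + (if i < ?h \<and> ?h \<le> b then U2 else 0)"
    using Suc by auto
  have h: "i + 1 \<le> ?h" "?h \<le> b + 1" using Suc.prems by auto
  have S0: "K i ?h \<subseteq> lam0 L" using ab by (intro sub_lam0I) (auto simp: mem_K)
  have z: "(a, ?h - 1) \<in> K i ?h" using h by (auto simp: mem_K)
  have w: "(a, ?h) \<in> lam0 L" "(a, ?h) \<notin> K i ?h" using h ab by (auto simp: mem_lam0 mem_K)
  have eq: "insert (a, ?h) (K i ?h - {(a, ?h - 1)}) = K i (b + 1 - int (Suc n))"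
    using h by (auto simp: mem_K)
  have Em: "En U1 U2 D L (insert (a, ?h) (K i ?h - {(a, ?h - 1)})) = En U1 U2 D L (K i ?h)
     + U1 * (iv True + iv False) + U2 * (iv (i \<le> ?h - 2) + iv False)
     - U1 * (iv True + iv False) - U2 * (iv False + iv (?h \<le> b))"
    using En_move[OF S0 z w, of U1 U2 D] h ab by (simp add: mem_K iv_def)
  have Enew: "En U1 U2 D L (K i (b + 1 - int (Suc n))) = e + (if i < b + 1 - int (Suc n) \<and> b + 1 - int (Suc n) \<le> b then U2 else 0)"
    using Em eq IH(2) h by (auto simp: iv_def)
  have "En U1 U2 D L (K i (b + 1 - int (Suc n))) \<le> M" using Enew M U by auto
  hence "reach U1 U2 D L M (K i (b+1)) (insert (a, ?h) (K i ?h - {(a, ?h - 1)}))"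
    using reach_move_end[OF IH(1) z w(2)] w(1) lam0_sub eq by (auto simp: adj_def)
  thus ?case using eq Enew by simp
qed

lemma row_shift:
  assumes U: "0 \<le> U1" "0 \<le> U2" "0 \<le> D"
    and ab: "1 \<le> i" "i \<le> b" "a \<le> int L - 1" "b + 1 \<le> int L - 1" "i + 2 \<le> a"
    and e: "En U1 U2 D L (Q i (a-i-1)) = e" and M: "e + U1 \<le> M"
  shows "int n \<le> i + 1 \<Longrightarrow> reach U1 U2 D L M (Q i (a-i-1)) (Q i (a-i-1 + int n)) \<and>
     En U1 U2 D L (Q i (a-i-1 + int n)) = e + (if 0 < n \<and> int n < i + 1 then U1 else if int n = i + 1 \<and> i = b then - U2 else 0)"
proof (induction n)
  case 0
  have "Q i (a-i-1) \<subseteq> lam0 L" using ab by (intro sub_lam0I) (auto simp: mem_Q)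
  hence "Q i (a-i-1) \<subseteq> lam L" using lam0_sub by blast
  thus ?case using reach_refl e M U ab by auto
next
  case (Suc n)
  let ?g = "a - i - 1 + int n"
  have IH: "reach U1 U2 D L M (Q i (a-i-1)) (Q i ?g)"
    "En U1 U2 D L (Q i ?g) = e + (if 0 < n \<and> int n < i + 1 then U1 else if int n = i + 1 \<and> i = b then - U2 else 0)"
    using Suc by auto
  have g: "a - i - 1 \<le> ?g" "?g \<le> a - 1" using Suc.prems by auto
  have S0: "Q i ?g \<subseteq> lam0 L" using ab by (intro sub_lam0I) (auto simp: mem_Q)
  have z: "(?g + 1, b + 1) \<in> Q i ?g" using g by (auto simp: mem_Q)
  have w: "(?g, b + 1) \<in> lam0 L" "(?g, b + 1) \<notin> Q i ?g" using g ab by (auto simp: mem_lam0 mem_Q)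
  have eq: "insert (?g, b+1) (Q i ?g - {(?g + 1, b+1)}) = Q i (a - i - 1 + int (Suc n))"
    using g by (auto simp: mem_Q)
  have Em: "En U1 U2 D L (insert (?g, b+1) (Q i ?g - {(?g + 1, b+1)})) = En U1 U2 D L (Q i ?g)
     + U1 * (iv False + iv (?g + 2 \<le> a)) + U2 * (iv (?g + 1 \<le> a - 1 \<or> (?g + 1 = a \<and> i + 1 \<le> b)) + iv False)
     - U1 * (iv (a - i - 1 \<le> ?g - 1) + iv False) - U2 * (iv True + iv False)"
    using En_move[OF S0 z w, of U1 U2 D] g ab by (simp add: mem_Q iv_def)
  have Enew: "En U1 U2 D L (Q i (a - i - 1 + int (Suc n))) = e + (if 0 < Suc n \<and> int (Suc n) < i + 1 then U1 else if int (Suc n) = i + 1 \<and> i = b then - U2 else 0)"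
    using Em eq IH(2) g ab by (auto simp: iv_def)
  have "En U1 U2 D L (Q i (a - i - 1 + int (Suc n))) \<le> M" using Enew M U by auto
  hence "reach U1 U2 D L M (Q i (a-i-1)) (insert (?g, b+1) (Q i ?g - {(?g + 1, b+1)}))"
    using reach_move_end[OF IH(1) z w(2)] w(1) lam0_sub eq by (auto simp: adj_def)
  thus ?case using eq Enew by simp
qed

lemma KQ1: "1 \<le> i \<Longrightarrow> i \<le> b \<Longrightarrow> K i i = Q i (a-i-1)" by (auto simp: K_def Q_def)
lemma KQ2: "Q i a = K (i+1) (b+1)" by (auto simp: K_def Q_def)

lemma transfer:
  assumes U: "0 \<le> U1" "0 \<le> U2" "0 \<le> D"
    and ab: "1 \<le> i" "i \<le> b" "a \<le> int L - 1" "b + 1 \<le> int L - 1" "b + 2 \<le> a"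
    and e: "En U1 U2 D L (K i (b+1)) = e" and M: "e + U1 \<le> M" "e + U2 \<le> M"
  shows "reach U1 U2 D L M (K i (b+1)) (K (i+1) (b+1)) \<and>
     En U1 U2 D L (K (i+1) (b+1)) = e - (if i = b then U2 else 0)"
proof -
  have c: "reach U1 U2 D L M (K i (b+1)) (K i (b + 1 - int (nat (b+1-i)))) \<and>
     En U1 U2 D L (K i (b + 1 - int (nat (b+1-i)))) = e + (if i < b + 1 - int (nat (b+1-i)) \<and> b + 1 - int (nat (b+1-i)) \<le> b then U2 else 0)"
    using col_slide[OF U, of i e M "nat (b+1-i)"] ab e M by auto
  have c': "reach U1 U2 D L M (K i (b+1)) (Q i (a-i-1))" "En U1 U2 D L (Q i (a-i-1)) = e"
    using c ab KQ1[of i] by auto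
  have r: "reach U1 U2 D L M (Q i (a-i-1)) (Q i (a-i-1 + int (nat (i+1)))) \<and>
     En U1 U2 D L (Q i (a-i-1 + int (nat (i+1)))) = e + (if 0 < nat (i+1) \<and> int (nat (i+1)) < i + 1 then U1 else if int (nat (i+1)) = i + 1 \<and> i = b then - U2 else 0)"
    using row_shift[OF U, of i e M "nat (i+1)"] ab c'(2) M by auto
  have eqa: "a - i - 1 + int (nat (i+1)) = a" using ab by auto
  show ?thesis using r eqa KQ2[of i] reach_trans[OF c'(1)] by auto
qed

lemma conv_chain:
  assumes U: "0 \<le> U1" "0 \<le> U2" "0 \<le> D"
    and ab: "1 \<le> b" "a \<le> int L - 1" "b + 1 \<le> int L - 1" "b + 2 \<le> a"
    and e: "En U1 U2 D L (K 1 (b+1)) = e" and M: "e + U1 \<le> M" "e + U2 \<le> M"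
  shows "int k \<le> b \<Longrightarrow> reach U1 U2 D L M (K 1 (b+1)) (K (1 + int k) (b+1)) \<and>
     En U1 U2 D L (K (1 + int k) (b+1)) = e - (if int k = b then U2 else 0)"
proof (induction k)
  case 0
  have "K 1 (b+1) \<subseteq> lam0 L" using ab by (intro sub_lam0I) (auto simp: mem_K)
  hence "K 1 (b+1) \<subseteq> lam L" using lam0_sub by blast
  thus ?case using reach_refl e M U ab by auto
next
  case (Suc k)
  have IH: "reach U1 U2 D L M (K 1 (b+1)) (K (1 + int k) (b+1))" "En U1 U2 D L (K (1 + int k) (b+1)) = e"
    using Suc by auto
  have t: "reach U1 U2 D L M (K (1 + int k) (b+1)) (K (1 + int k + 1) (b+1)) \<and>
     En U1 U2 D L (K (1 + int k + 1) (b+1)) = e - (if 1 + int k = b then U2 else 0)"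
    using transfer[OF U, of "1 + int k" e M] ab Suc.prems IH(2) M by auto
  thus ?case using reach_trans[OF IH(1)] by (auto simp: add.commute add.left_commute)
qed

lemma conversion:
  assumes U: "0 \<le> U1" "0 \<le> U2" "0 \<le> D"
    and ab: "1 \<le> b" "a \<le> int L - 1" "b + 1 \<le> int L - 1" "b + 2 \<le> a"
    and e: "En U1 U2 D L (Rc a b \<union> Hs (a-1) (a-1) (b+1)) = e" and M: "e + U1 \<le> M" "e + U2 \<le> M"
  shows "reach U1 U2 D L M (Rc a b \<union> Hs (a-1) (a-1) (b+1)) (Rc (a-1) b \<union> Hs (a-b-1) (a-1) (b+1)) \<and>
     En U1 U2 D L (Rc (a-1) b \<union> Hs (a-b-1) (a-1) (b+1)) = e - U2"
proof -
  have e1: "K 1 (b+1) = Rc a b \<union> Hs (a-1) (a-1) (b+1)" using ab by (auto simp: K_def)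
  have e2: "K (1 + int (nat b)) (b+1) = Rc (a-1) b \<union> Hs (a-b-1) (a-1) (b+1)" using ab by (auto simp: K_def)
  show ?thesis using conv_chain[OF U ab, of e M "nat b"] e M e1 e2 ab by auto
qed

end

context
  fixes U1 U2 D :: real and L :: nat
begin

lemma Ef_diff_a: "Ef U1 U2 D y b - Ef U1 U2 D x b = real_of_int (y - x) * (U2 - (U1 + U2 - D) * b)"
  unfolding Ef_def by (simp add: algebra_simps)

lemma Ef_mono_a:
  assumes "x \<le> y" "(U1 + U2 - D) * b \<le> U2"
  shows "Ef U1 U2 D x b \<le> Ef U1 U2 D y b"
proof -
  have "0 \<le> real_of_int (y - x) * (U2 - (U1 + U2 - D) * b)" using assms by simp
  thus ?thesis using Ef_diff_a[of y b x] by simp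
qed

lemma Ef_anti_a:
  assumes "x \<le> y" "U2 \<le> (U1 + U2 - D) * b"
  shows "Ef U1 U2 D y b \<le> Ef U1 U2 D x b"
proof -
  have "real_of_int (y - x) * (U2 - (U1 + U2 - D) * b) \<le> 0" using assms
    by (intro mult_nonneg_nonpos) auto
  thus ?thesis using Ef_diff_a[of y b x] by simp
qed

lemma level:
  assumes U: "0 \<le> U1" "0 \<le> U2" "0 \<le> D" "0 \<le> (U1 + U2 - D)" "2 * U2 \<le> U1"
    and b: "1 \<le> b" "2 * b + 1 \<le> int L - 1" and epsb: "(U1 + U2 - D) * b \<le> U2"
    and a0: "1 \<le> a0" "a0 \<le> 2 * b"
    and e: "En U1 U2 D L (Rc a0 b) = Ef U1 U2 D a0 b"
    and M: "Ef U1 U2 D (2*b+1) b + 2 * U1 - (U1 + U2 - D) \<le> M"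
  shows "reach U1 U2 D L M (Rc a0 b) (Rc (2*b) (b+1)) \<and> En U1 U2 D L (Rc (2*b) (b+1)) = Ef U1 U2 D (2*b) (b+1)"
proof -
  let ?E = "Ef U1 U2 D"
  let ?g = "?E (2*b+1) b + 2 * U1 - (U1 + U2 - D)"
  have mono: "?E x b \<le> ?E (2*b) b" if "x \<le> 2*b" for x using Ef_mono_a[OF that epsb] .
  have E2b: "?E (2*b) b + D \<le> ?g" "?E (2*b) b + 2*D - U1 \<le> ?g"
    using Ef_diff_a[of "2*b+1" b "2*b"] U epsb by (auto simp: algebra_simps)
  have c: "reach U1 U2 D L M (Rc a0 b) (Rc (a0 + int (nat (2*b+1-a0))) b) \<and>
     En U1 U2 D L (Rc (a0 + int (nat (2*b+1-a0))) b) = ?E (a0 + int (nat (2*b+1-a0))) b"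
  proof (rule cols[OF U(1-4)])
    show "1 \<le> a0" "1 \<le> b" "b \<le> int L - 1" "a0 + int (nat (2 * b + 1 - a0)) \<le> int L - 1" using a0 b by auto
    show "En U1 U2 D L (Rc a0 b) = ?E a0 b" using e .
    show "?E a0 b \<le> M" using mono[of a0] a0 E2b M U by auto
    show "\<forall>k<nat (2 * b + 1 - a0). ?E (a0 + int k) b + D \<le> M \<and> ?E (a0 + int k) b + 2 * D - U1 \<le> M"
    proof (intro allI impI)
      fix k assume "k < nat (2 * b + 1 - a0)"
      hence "a0 + int k \<le> 2*b" by auto
      thus "?E (a0 + int k) b + D \<le> M \<and> ?E (a0 + int k) b + 2 * D - U1 \<le> M"
        using mono[of "a0 + int k"] E2b M by auto
    qed
  qed
  have eqa: "a0 + int (nat (2*b+1-a0)) = 2*b+1" using a0 by auto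
  have c1: "reach U1 U2 D L M (Rc a0 b) (Rc (2*b+1) b)" "En U1 U2 D L (Rc (2*b+1) b) = ?E (2*b+1) b"
    using c eqa by auto
  have p: "reach U1 U2 D L M (Rc (2*b+1) b) (Rc (2*b+1) b \<union> Hs (2*b) (2*b) (b+1)) \<and>
      En U1 U2 D L (Rc (2*b+1) b \<union> Hs (2*b) (2*b) (b+1)) = ?E (2*b+1) b + D - U2"
    using prot[OF U(1-3), of "2*b" "2*b+1" L b "?E (2*b+1) b" M] b c1(2) M U by auto
  have cv: "reach U1 U2 D L M (Rc (2*b+1) b \<union> Hs (2*b+1-1) (2*b+1-1) (b+1)) (Rc (2*b+1-1) b \<union> Hs (2*b+1-b-1) (2*b+1-1) (b+1)) \<and>
     En U1 U2 D L (Rc (2*b+1-1) b \<union> Hs (2*b+1-b-1) (2*b+1-1) (b+1)) = (?E (2*b+1) b + D - U2) - U2"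
    using conversion[OF U(1-3), of b "2*b+1" L "?E (2*b+1) b + D - U2" M] b p M U by auto
  have cv1: "reach U1 U2 D L M (Rc (2*b+1) b \<union> Hs (2*b) (2*b) (b+1)) (Rc (2*b) b \<union> Hs b (2*b) (b+1))"
     "En U1 U2 D L (Rc (2*b) b \<union> Hs b (2*b) (b+1)) = ?E (2*b+1) b + D - 2*U2"
    using cv by (auto simp: algebra_simps)
  have f: "reach U1 U2 D L M (Rc (2*b) b \<union> Hs b (2*b) (b+1)) (Rc (2*b) b \<union> Hs (b - int (nat (b-1))) (2*b) (b+1)) \<and>
     En U1 U2 D L (Rc (2*b) b \<union> Hs (b - int (nat (b-1))) (2*b) (b+1)) = (?E (2*b+1) b + D - 2*U2) - (U1 + U2 - D) * (nat (b-1))"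
    using fill_left[OF U(1-4), of b L b "2*b" "2*b" "?E (2*b+1) b + D - 2*U2" M "nat (b-1)"] b cv1(2) M U
    by (auto simp: algebra_simps)
  have eqR: "Rc (2*b) b \<union> Hs (b - int (nat (b-1))) (2*b) (b+1) = Rc (2*b) (b+1)" using b by auto
  have nb: "real (nat (b-1)) = real_of_int b - 1" using b by auto
  have fin: "(?E (2*b+1) b + D - 2*U2) - (U1 + U2 - D) * (real_of_int b - 1) = ?E (2*b) (b+1)"
    unfolding Ef_def by (simp add: algebra_simps)
  show ?thesis
    using reach_trans[OF reach_trans[OF reach_trans[OF c1(1) conjunct1[OF p]] cv1(1)] conjunct1[OF f]]
      conjunct2[OF f] eqR nb fin by auto
qed

lemma En_empty: "En U1 U2 D L {} = 0"
  using H_ind[of "{}" L U1 U2 D] by (simp add: hb_def vb_def)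

lemma phase1:
  assumes U: "0 \<le> U1" "0 \<le> U2" "0 \<le> D" "0 \<le> (U1 + U2 - D)" "2 * U2 \<le> U1"
    and B: "2 * (1 + int n) + 1 \<le> int L - 1" "(U1 + U2 - D) * (1 + int n) \<le> U2"
    and M: "\<forall>b. 1 \<le> b \<and> b \<le> 1 + int n \<longrightarrow> Ef U1 U2 D (2*b+1) b + 2 * U1 - (U1 + U2 - D) \<le> M"
    and MD: "D \<le> M"
  shows "reach U1 U2 D L M {} (Rc (2*(1 + int n)) (1 + int n + 1)) \<and>
     En U1 U2 D L (Rc (2*(1 + int n)) (1 + int n + 1)) = Ef U1 U2 D (2*(1 + int n)) (1 + int n + 1)"
  using B M
proof (induction n)
  case 0
  have w: "reach U1 U2 D L M {} (insert (1,1) {})"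
    using walk_down[OF U(1-3), of "{}" L 1 1 M] 0 MD En_empty by auto
  have z: "(1::int,1::int) \<in> lam0 L" "(1::int,1::int) \<notin> {}" using 0 by (auto simp: mem_lam0)
  have "En U1 U2 D L (insert (1,1) {}) = 0 + D - U1 * (iv False + iv False) - U2 * (iv False + iv False)"
    using En_insert[OF _ z, of U1 U2 D] En_empty by simp
  moreover have eq11: "insert (1,1) {} = Rc 1 1" by auto
  ultimately have e1: "En U1 U2 D L (Rc 1 1) = Ef U1 U2 D 1 1" by (simp add: iv_def Ef_def)
  have w1: "reach U1 U2 D L M {} (Rc 1 1)" using w eq11 by simp
  have l: "reach U1 U2 D L M (Rc 1 1) (Rc (2*1) (1+1)) \<and> En U1 U2 D L (Rc (2*1) (1+1)) = Ef U1 U2 D (2*1) (1+1)"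
    using level[OF U, of 1 1 M] 0 e1 by auto
  thus ?case using reach_trans[OF w1] by auto
next
  case (Suc n)
  have IH: "reach U1 U2 D L M {} (Rc (2*(1 + int n)) (1 + int n + 1))"
    "En U1 U2 D L (Rc (2*(1 + int n)) (1 + int n + 1)) = Ef U1 U2 D (2*(1 + int n)) (1 + int n + 1)"
  proof -
    have "(U1 + U2 - D) * (1 + int n) \<le> (U1 + U2 - D) * (1 + int (Suc n))" using U(4) by (intro mult_left_mono) auto
    hence "(U1 + U2 - D) * (1 + int n) \<le> U2" using Suc.prems(2) by linarith
    moreover have "2 * (1 + int n) + 1 \<le> int L - 1" using Suc.prems(1) by auto
    moreover have "\<forall>b. 1 \<le> b \<and> b \<le> 1 + int n \<longrightarrow> Ef U1 U2 D (2*b+1) b + 2 * U1 - (U1 + U2 - D) \<le> M"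
      using Suc.prems(3) by auto
    ultimately show "reach U1 U2 D L M {} (Rc (2*(1 + int n)) (1 + int n + 1))"
      "En U1 U2 D L (Rc (2*(1 + int n)) (1 + int n + 1)) = Ef U1 U2 D (2*(1 + int n)) (1 + int n + 1)"
      using Suc.IH by auto
  qed
  let ?b = "1 + int (Suc n)"
  have l: "reach U1 U2 D L M (Rc (2*(1 + int n)) ?b) (Rc (2*?b) (?b+1)) \<and> En U1 U2 D L (Rc (2*?b) (?b+1)) = Ef U1 U2 D (2*?b) (?b+1)"
  proof (rule level[OF U])
    show "1 \<le> ?b" "2 * ?b + 1 \<le> int L - 1" "1 \<le> 2*(1 + int n)" "2*(1 + int n) \<le> 2 * ?b" using Suc.prems by auto
    show "(U1 + U2 - D) * real_of_int ?b \<le> U2" using Suc.prems(2) by simp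
    show "En U1 U2 D L (Rc (2 * (1 + int n)) ?b) = Ef U1 U2 D (2 * (1 + int n)) ?b"
      using IH(2) by (simp add: add.commute add.left_commute)
    show "Ef U1 U2 D (2 * ?b + 1) ?b + 2 * U1 - (U1 + U2 - D) \<le> M"
      using Suc.prems(3)[rule_format, of ?b] by simp
  qed
  have IH1: "reach U1 U2 D L M {} (Rc (2*(1 + int n)) ?b)" using IH(1) by (simp add: add.commute add.left_commute)
  show ?case using l reach_trans[OF IH1] by (auto simp: add.commute add.left_commute)
qed

lemma rows:
  assumes U: "0 \<le> U1" "0 \<le> U2" "0 \<le> D" "0 \<le> (U1 + U2 - D)"
    and W: "1 \<le> b0" "b0 + int n \<le> int L - 1" "1 \<le> int L - 1" and DU: "U2 \<le> D"
    and e: "En U1 U2 D L (Rc (int L - 1) b0) = Ef U1 U2 D (int L - 1) b0"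
    and M0: "Ef U1 U2 D (int L - 1) b0 \<le> M"
    and M: "\<forall>b. b0 \<le> b \<and> b < b0 + int n \<longrightarrow> Ef U1 U2 D (int L - 1) b + 2 * D - U2 \<le> M"
  shows "reach U1 U2 D L M (Rc (int L - 1) b0) (Rc (int L - 1) (b0 + int n)) \<and>
     En U1 U2 D L (Rc (int L - 1) (b0 + int n)) = Ef U1 U2 D (int L - 1) (b0 + int n)"
  using W(2) M
proof (induction n)
  case 0
  have "Rc (int L - 1) b0 \<subseteq> lam L" using Rc_sub W by auto
  thus ?case using reach_refl e M0 by auto
next
  case (Suc n)
  let ?W = "int L - 1"
  let ?b = "b0 + int n"
  have IH: "reach U1 U2 D L M (Rc ?W b0) (Rc ?W ?b)" "En U1 U2 D L (Rc ?W ?b) = Ef U1 U2 D ?W ?b"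
    using Suc by auto
  have Mb: "Ef U1 U2 D ?W ?b + 2 * D - U2 \<le> M" using Suc.prems(2) by auto
  have p: "reach U1 U2 D L M (Rc ?W ?b) (Rc ?W ?b \<union> Hs ?W ?W (?b+1)) \<and>
      En U1 U2 D L (Rc ?W ?b \<union> Hs ?W ?W (?b+1)) = Ef U1 U2 D ?W ?b + D - U2"
    using prot[OF U(1-3), of ?W ?W L ?b "Ef U1 U2 D ?W ?b" M] W Suc.prems IH(2) Mb U DU by auto
  have f: "reach U1 U2 D L M (Rc ?W ?b \<union> Hs ?W ?W (?b+1)) (Rc ?W ?b \<union> Hs (?W - int (nat (?W - 1))) ?W (?b+1)) \<and>
     En U1 U2 D L (Rc ?W ?b \<union> Hs (?W - int (nat (?W - 1))) ?W (?b+1)) = (Ef U1 U2 D ?W ?b + D - U2) - (U1 + U2 - D) * (nat (?W-1))"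
    using fill_left[OF U, of ?b L ?W ?W ?W "Ef U1 U2 D ?W ?b + D - U2" M "nat (?W - 1)"] W Suc.prems p Mb
    by (auto simp: algebra_simps)
  have eqR: "Rc ?W ?b \<union> Hs (?W - int (nat (?W - 1))) ?W (?b+1) = Rc ?W (b0 + int (Suc n))" using W by auto
  have nb: "real (nat (?W-1)) = real_of_int ?W - 1" using W by auto
  have fin: "(Ef U1 U2 D ?W ?b + D - U2) - (U1 + U2 - D) * (real_of_int ?W - 1) = Ef U1 U2 D ?W (b0 + int (Suc n))"
    unfolding Ef_def by (simp add: algebra_simps)
  show ?case
    using reach_trans[OF reach_trans[OF IH(1) conjunct1[OF p]] conjunct1[OF f]] conjunct2[OF f] eqR nb fin by auto
qed

end

lemma Gamma_eq: "Gamma U1 U2 D = U1 * l + 2 * U2 * l + U1 - U2 - 2 * (U1 + U2 - D) * l * l + 3 * (U1 + U2 - D) * l - 2 * (U1 + U2 - D)"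
  if "l = ell2 U1 U2 D"
  unfolding Gamma_def Let_def eps_def that power2_eq_square by (simp add: algebra_simps)

lemma ident1:
  fixes pU qU dD lL bB :: real
  shows "(pU * lL + 2 * qU * lL + pU - qU - 2 * (pU + qU - dD) * lL * lL + 3 * (pU + qU - dD) * lL - 2 * (pU + qU - dD))
    - (- (pU + qU - dD) * (2*bB+1) * bB + pU * bB + qU * (2*bB+1) + 2 * pU - (pU + qU - dD))
    = (lL - 1 - bB) * (pU + 2 * qU - (pU + qU - dD) * (2 * lL + 2 * bB - 1))"
  by (simp add: algebra_simps)

lemma ident2:
  fixes pU qU dD lL :: real
  shows "(pU * lL + 2 * qU * lL + pU - qU - 2 * (pU + qU - dD) * lL * lL + 3 * (pU + qU - dD) * lL - 2 * (pU + qU - dD))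
    = (- (pU + qU - dD) * (2*lL-3) * lL + pU * lL + qU * (2*lL-3)) + 2 * dD - pU"
  by (simp add: algebra_simps)

lemma Ef_diff_b: "Ef U1 U2 D a y - Ef U1 U2 D a x = real_of_int (y - x) * (U1 - (U1 + U2 - D) * a)"
  unfolding Ef_def by (simp add: algebra_simps)

lemma ind_empty: "ind {} = zero_conf" unfolding ind_def zero_conf_def by auto
lemma ind_lam0: "ind (lam0 L) = one_conf L" unfolding ind_def one_conf_def by auto
lemma H_zero: "H U1 U2 D L zero_conf = 0" unfolding H_def zero_conf_def by simp

lemma Rc_WW: "Rc (int L - 1) (int L - 1) = lam0 L"
  unfolding Rc_def lam0_char by auto

lemma Phi_le:
  assumes "reach U1 U2 D L M {} (lam0 L)"
  shows "Phi U1 U2 D L zero_conf (one_conf L) \<le> M"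
proof -
  obtain p where p: "is_path L zero_conf (one_conf L) p" "\<forall>c\<in>set p. H U1 U2 D L c \<le> M"
    using assms unfolding reach_def ind_empty ind_lam0 by blast
  have ne: "set p \<noteq> {}" using p(1) unfolding is_path_def by auto
  have m: "Max (H U1 U2 D L ` set p) \<le> M" using p(2) ne by (subst Max_le_iff) auto
  have bdd: "bdd_below ((\<lambda>q. Max (H U1 U2 D L ` set q)) ` {q. is_path L zero_conf (one_conf L) q})"
  proof (rule bdd_belowI[of _ 0])
    fix x assume "x \<in> (\<lambda>q. Max (H U1 U2 D L ` set q)) ` {q. is_path L zero_conf (one_conf L) q}"
    then obtain q where q: "is_path L zero_conf (one_conf L) q" "x = Max (H U1 U2 D L ` set q)" by auto
    have qn: "q \<noteq> []" "hd q = zero_conf" using q(1) unfolding is_path_def by auto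
    have "hd q \<in> set q" using qn(1) by (rule hd_in_set)
    hence z: "zero_conf \<in> set q" using qn(2) by simp
    have "H U1 U2 D L zero_conf \<le> x" using q(2) z by (simp add: Max_ge)
    thus "0 \<le> x" using H_zero by simp
  qed
  have "Phi U1 U2 D L zero_conf (one_conf L) \<le> Max (H U1 U2 D L ` set p)"
    unfolding Phi_def by (rule cINF_lower[OF bdd]) (use p(1) in simp)
  thus ?thesis using m by simp
qed

theorem corollary3p2:
  fixes U1 U2 :: real
  assumes "U2 > 0" and "U1 > 2 * U2"
  shows "\<exists>\<epsilon>0 > 0. \<forall>\<Delta>::real. \<Delta> > 0 \<and> 0 < eps U1 U2 \<Delta> \<and> eps U1 U2 \<Delta> < \<epsilon>0
            \<and> U2 / eps U1 U2 \<Delta> \<notin> \<nat> \<longrightarrow>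
          (\<exists>L0::nat. \<forall>L\<ge>L0. Phi U1 U2 \<Delta> L zero_conf (one_conf L) \<le> Gamma U1 U2 \<Delta>)"
proof -
  define e0 where "e0 = min U2 (U1 - 2*U2)"
  have e0pos: "e0 > 0" using assms unfolding e0_def by auto
  show ?thesis
  proof (intro exI[of _ e0] conjI allI impI)
    show "e0 > 0" by (rule e0pos)
    fix D :: real
    assume HD: "D > 0 \<and> 0 < eps U1 U2 D \<and> eps U1 U2 D < e0 \<and> U2 / eps U1 U2 D \<notin> \<nat>"
    define e where "e = U1 + U2 - D"
    have epos: "0 < e" and eU2: "e < U2" and eU1: "e < U1 - 2 * U2" and nN: "U2 / e \<notin> \<nat>"
      using HD unfolding e_def eps_def e0_def by auto
    define li where "li = \<lceil>U2 / e\<rceil>"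
    define l where "l = real_of_int li"
    have ell: "ell2 U1 U2 D = l" unfolding ell2_def l_def li_def e_def eps_def by simp
    have c1: "l - 1 < U2 / e" unfolding l_def li_def by linarith
    have c2: "U2 / e \<le> l" unfolding l_def li_def by linarith
    have c3: "U2 / e \<noteq> l"
    proof
      assume h: "U2 / e = l"
      have "0 < U2 / e" using assms epos by auto
      hence "0 \<le> li" using h l_def by auto
      hence "U2 / e = real (nat li)" using h l_def by auto
      thus False using nN by (metis of_nat_in_Nats)
    qed
    have "U2 / e < l" using c2 c3 by auto
    hence lU2: "U2 < e * l" using epos by (simp add: pos_divide_less_eq mult.commute)
    have lU2': "e * (l - 1) < U2" using c1 epos by (simp add: less_divide_eq mult.commute)
    have "1 < U2 / e" using eU2 epos by simp
    hence li2: "2 \<le> li" using c2 unfolding l_def by linarith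
    define G where "G = Gamma U1 U2 D"
    have Geq: "G = U1 * l + 2 * U2 * l + U1 - U2 - 2 * (U1 + U2 - D) * l * l + 3 * (U1 + U2 - D) * l - 2 * (U1 + U2 - D)"
      unfolding G_def by (rule Gamma_eq) (use ell in simp)
    define K where "K = (U1 * l + 2 * D - U2 - G) / (e * l - U2)"
    obtain N :: nat where N: "max (max (2 * l) (U1 / e)) K < real N" using reals_Archimedean2 by blast
    show "\<exists>L0::nat. \<forall>L\<ge>L0. Phi U1 U2 D L zero_conf (one_conf L) \<le> Gamma U1 U2 D"
    proof (intro exI[of _ "N+1"] allI impI)
      fix L :: nat assume LN: "N + 1 \<le> L"
      define W where "W = int L - 1"
      have WN: "real N \<le> real_of_int W" using LN unfolding W_def by auto
      have eD: "U1 + U2 - D = e" unfolding e_def by simp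
      have U: "0 \<le> U1" "0 \<le> U2" "0 \<le> D" "0 \<le> (U1 + U2 - D)" "2 * U2 \<le> U1"
        using assms epos eU1 eU2 HD by (auto simp: eD)
      have W2l: "2 * l < real_of_int W" using N WN by auto
      hence W2li: "2 * li + 1 \<le> W" unfolding l_def by linarith
      have "U1 / e < real_of_int W" using N WN by auto
      hence eW: "U1 < e * real_of_int W" using epos by (simp add: pos_divide_less_eq mult.commute)
      have WK: "K < real_of_int W" using N WN by auto
      have eqn: "1 + int (nat (li - 2)) = li - 1" using li2 by auto
      have gle: "Ef U1 U2 D (2*b+1) b + 2 * U1 - (U1 + U2 - D) \<le> G" if b: "1 \<le> b" "b \<le> li - 1" for b
      proof -
        have bl: "real_of_int b \<le> l - 1" using b unfolding l_def by linarith
        have "e * (2 * l + 2 * real_of_int b - 1) \<le> e * (4 * l - 3)"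
          using bl epos by (intro mult_left_mono) auto
        moreover have "e * (4 * l - 3) = 4 * (e * (l - 1)) + e" by (simp add: algebra_simps)
        ultimately have "e * (2 * l + 2 * real_of_int b - 1) \<le> U1 + 2 * U2" using lU2' eU1 by linarith
        hence f2: "0 \<le> U1 + 2 * U2 - (U1 + U2 - D) * (2 * l + 2 * real_of_int b - 1)" using eD by simp
        have f1: "0 \<le> l - 1 - real_of_int b" using bl by simp
        have "G - (Ef U1 U2 D (2*b+1) b + 2 * U1 - (U1 + U2 - D)) = (l - 1 - real_of_int b) * (U1 + 2 * U2 - (U1 + U2 - D) * (2 * l + 2 * real_of_int b - 1))"
          unfolding Geq Ef_def using ident1[where pU=U1 and qU=U2 and dD=D and lL=l and bB="real_of_int b"] by simp
        moreover have "0 \<le> (l - 1 - real_of_int b) * (U1 + 2 * U2 - (U1 + U2 - D) * (2 * l + 2 * real_of_int b - 1))"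
          using f1 f2 by simp
        ultimately show ?thesis by linarith
      qed
      have DG: "D \<le> G"
      proof -
        have "Ef U1 U2 D (2*1+1) 1 + 2 * U1 - (U1 + U2 - D) \<le> G" using gle[of 1] li2 by auto
        moreover have "D \<le> Ef U1 U2 D (2*1+1) 1 + 2 * U1 - (U1 + U2 - D)"
          unfolding Ef_def using eD eU2 epos assms by simp
        ultimately show ?thesis by linarith
      qed
      have P1: "reach U1 U2 D L G {} (Rc (2*(1 + int (nat (li-2)))) (1 + int (nat (li-2)) + 1)) \<and>
          En U1 U2 D L (Rc (2*(1 + int (nat (li-2)))) (1 + int (nat (li-2)) + 1)) = Ef U1 U2 D (2*(1 + int (nat (li-2)))) (1 + int (nat (li-2)) + 1)"
      proof (rule phase1[OF U])
        have "2 * (1 + int (nat (li - 2))) + 1 = 2*li - 1" using eqn by simp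
        thus "2 * (1 + int (nat (li - 2))) + 1 \<le> int L - 1" using W2li W_def by linarith
        have "(U1 + U2 - D) * real_of_int (1 + int (nat (li - 2))) = e * (l - 1)"
          using eqn eD unfolding l_def by simp
        thus "(U1 + U2 - D) * real_of_int (1 + int (nat (li - 2))) \<le> U2" using lU2' by simp
        show "\<forall>b. 1 \<le> b \<and> b \<le> 1 + int (nat (li - 2)) \<longrightarrow> Ef U1 U2 D (2 * b + 1) b + 2 * U1 - (U1 + U2 - D) \<le> G"
          using gle eqn by auto
        show "D \<le> G" by (rule DG)
      qed
      define a0 where "a0 = 2 * li - 2"
      have P1': "reach U1 U2 D L G {} (Rc a0 li)" "En U1 U2 D L (Rc a0 li) = Ef U1 U2 D a0 li"
        using P1 eqn unfolding a0_def by (auto simp: algebra_simps)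
      have Gc: "G = Ef U1 U2 D (2*li-3) li + 2 * D - U1"
        unfolding Geq Ef_def using ident2[where pU=U1 and qU=U2 and dD=D and lL=l] unfolding l_def by simp
      have colle: "Ef U1 U2 D x li \<le> Ef U1 U2 D (2*li-3) li" if "2*li - 3 \<le> x" for x
        by (rule Ef_anti_a[OF that]) (use lU2 eD l_def in simp)
      define n2 where "n2 = nat (W - a0)"
      have a0n2: "a0 + int n2 = W" unfolding n2_def a0_def using W2li by auto
      have C: "reach U1 U2 D L G (Rc a0 li) (Rc (a0 + int n2) li) \<and> En U1 U2 D L (Rc (a0 + int n2) li) = Ef U1 U2 D (a0 + int n2) li"
      proof (rule cols[OF U(1-4)])
        show "1 \<le> a0" "1 \<le> li" "li \<le> int L - 1" "a0 + int n2 \<le> int L - 1"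
          using li2 a0n2 W2li unfolding a0_def W_def by auto
        show "En U1 U2 D L (Rc a0 li) = Ef U1 U2 D a0 li" by (rule P1'(2))
        show "Ef U1 U2 D a0 li \<le> G" using colle[of a0] Gc U eU2 eD unfolding a0_def by auto
        show "\<forall>k<n2. Ef U1 U2 D (a0 + int k) li + D \<le> G \<and> Ef U1 U2 D (a0 + int k) li + 2 * D - U1 \<le> G"
        proof (intro allI impI)
          fix k assume "k < n2"
          have "Ef U1 U2 D (a0 + int k) li \<le> Ef U1 U2 D (2*li-3) li" using colle[of "a0 + int k"] unfolding a0_def by auto
          thus "Ef U1 U2 D (a0 + int k) li + D \<le> G \<and> Ef U1 U2 D (a0 + int k) li + 2 * D - U1 \<le> G"
            using Gc eU2 eD by auto
        qed
      qed
      have C': "reach U1 U2 D L G (Rc a0 li) (Rc W li)" "En U1 U2 D L (Rc W li) = Ef U1 U2 D W li"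
        using C a0n2 by auto
      have EWli: "Ef U1 U2 D W li + 2 * D - U2 \<le> G"
      proof -
        have pos: "0 < e * l - U2" using lU2 by simp
        have "K * (e * l - U2) = U1 * l + 2 * D - U2 - G" unfolding K_def using pos by simp
        moreover have "K * (e * l - U2) \<le> real_of_int W * (e * l - U2)" using WK pos by simp
        moreover have "Ef U1 U2 D W li = U1 * l - real_of_int W * (e * l - U2)"
          unfolding Ef_def l_def using eD by (simp add: algebra_simps)
        ultimately show ?thesis by linarith
      qed
      define n3 where "n3 = nat (W - li)"
      have lin3: "li + int n3 = W" unfolding n3_def using W2li li2 by auto
      have R: "reach U1 U2 D L G (Rc (int L - 1) li) (Rc (int L - 1) (li + int n3)) \<and>
         En U1 U2 D L (Rc (int L - 1) (li + int n3)) = Ef U1 U2 D (int L - 1) (li + int n3)"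
      proof (rule rows[OF U(1-4)])
        show "1 \<le> li" "li + int n3 \<le> int L - 1" "1 \<le> int L - 1" using li2 lin3 unfolding W_def by auto
        show "U2 \<le> D" using eD eU1 U by linarith
        show "En U1 U2 D L (Rc (int L - 1) li) = Ef U1 U2 D (int L - 1) li" using C'(2) unfolding W_def .
        show "Ef U1 U2 D (int L - 1) li \<le> G" using EWli eD eU1 U unfolding W_def by linarith
        show "\<forall>b. li \<le> b \<and> b < li + int n3 \<longrightarrow> Ef U1 U2 D (int L - 1) b + 2 * D - U2 \<le> G"
        proof (intro allI impI)
          fix b assume b: "li \<le> b \<and> b < li + int n3"
          have "real_of_int (b - li) * (U1 - (U1 + U2 - D) * real_of_int W) \<le> 0"
            using b eW eD by (intro mult_nonneg_nonpos) auto
          hence "Ef U1 U2 D W b \<le> Ef U1 U2 D W li" using Ef_diff_b[of U1 U2 D W b li] by simp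
          thus "Ef U1 U2 D (int L - 1) b + 2 * D - U2 \<le> G" using EWli unfolding W_def by simp
        qed
      qed
      have R': "reach U1 U2 D L G (Rc W li) (lam0 L)"
        using R lin3 Rc_WW[of L] unfolding W_def by auto
      have "reach U1 U2 D L G {} (lam0 L)"
        using reach_trans[OF reach_trans[OF P1'(1) C'(1)] R'] .
      thus "Phi U1 U2 D L zero_conf (one_conf L) \<le> Gamma U1 U2 D"
        using Phi_le G_def by simp
    qed
  qed
qed

end
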